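(* Let $G$ be a well-covered graph. Then every maximal induced bipartite subgraph of $G$ has the same weight, where the weight of a subgraph is twice its number of isolated vertices plus its number of non-isolated vertices.
   Context: All graphs are finite and simple; "subgraph" means induced subgraph, and a maximal bipartite subgraph is one maximal with respect to vertex inclusion among induced bipartite subgraphs. A graph is well-covered if every maximal independent set has the same cardinality. *)

theory Defs
  imports Main
begin

definition simple_graph :: "'a set \<Rightarrow> ('a \<Rightarrow> 'a \<Rightarrow> bool) \<Rightarrow> bool" where
  "simple_graph V E \<longleftrightarrow> finite V \<and> (\<forall>x y. E x y \<longrightarrow> E y x) \<and> (\<forall>x. \<not> E x x)
     \<and> (\<forall>x y. E x y \<longrightarrow> x \<in> V \<and> y \<in> V)"

definition independent_set :: "'a set \<Rightarrow> ('a \<Rightarrow> 'a \<Rightarrow> bool) \<Rightarrow> 'a set \<Rightarrow> bool" where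
  "independent_set V E I \<longleftrightarrow> I \<subseteq> V \<and> (\<forall>x\<in>I. \<forall>y\<in>I. \<not> E x y)"

definition maximal_independent_set :: "'a set \<Rightarrow> ('a \<Rightarrow> 'a \<Rightarrow> bool) \<Rightarrow> 'a set \<Rightarrow> bool" where
  "maximal_independent_set V E I \<longleftrightarrow> independent_set V E I \<and>
     (\<forall>J. independent_set V E J \<and> I \<subseteq> J \<longrightarrow> J = I)"

definition well_covered :: "'a set \<Rightarrow> ('a \<Rightarrow> 'a \<Rightarrow> bool) \<Rightarrow> bool" where
  "well_covered V E \<longleftrightarrow> (\<forall>I J. maximal_independent_set V E I \<and> maximal_independent_set V E J
     \<longrightarrow> card I = card J)"

definition induced_bipartite :: "'a set \<Rightarrow> ('a \<Rightarrow> 'a \<Rightarrow> bool) \<Rightarrow> 'a set \<Rightarrow> bool" where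
  "induced_bipartite V E S \<longleftrightarrow> S \<subseteq> V \<and>
     (\<exists>A B. A \<union> B = S \<and> A \<inter> B = {} \<and> independent_set V E A \<and> independent_set V E B)"

definition maximal_induced_bipartite :: "'a set \<Rightarrow> ('a \<Rightarrow> 'a \<Rightarrow> bool) \<Rightarrow> 'a set \<Rightarrow> bool" where
  "maximal_induced_bipartite V E S \<longleftrightarrow> induced_bipartite V E S \<and>
     (\<forall>T. induced_bipartite V E T \<and> S \<subseteq> T \<longrightarrow> T = S)"

definition isolated_in :: "('a \<Rightarrow> 'a \<Rightarrow> bool) \<Rightarrow> 'a set \<Rightarrow> 'a set" where
  "isolated_in E S = {x \<in> S. \<forall>y\<in>S. \<not> E x y}"

definition bip_weight :: "('a \<Rightarrow> 'a \<Rightarrow> bool) \<Rightarrow> 'a set \<Rightarrow> nat" where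
  "bip_weight E S = 2 * card (isolated_in E S) + card (S - isolated_in E S)"

end

theory Submission
  imports Defs
begin

lemma maxind_intro:
  assumes "independent_set V E A" "\<And>v. v \<in> V \<Longrightarrow> v \<notin> A \<Longrightarrow> \<exists>a\<in>A. E v a"
  shows "maximal_independent_set V E A"
  unfolding maximal_independent_set_def
proof (intro conjI allI impI)
  show "independent_set V E A" by fact
  fix J assume J: "independent_set V E J \<and> A \<subseteq> J"
  show "J = A"
  proof (rule ccontr)
    assume "J \<noteq> A"
    then obtain v where v: "v \<in> J" "v \<notin> A" using J by blast
    then have "v \<in> V" using J unfolding independent_set_def by blast
    then obtain a where "a \<in> A" "E v a" using assms(2) v by blast
    then show False using J v unfolding independent_set_def by blast
  qed
qed

lemma key:
  assumes G: "simple_graph V E" and M: "maximal_induced_bipartite V E S"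
  shows "\<exists>A B. maximal_independent_set V E A \<and> maximal_independent_set V E B
     \<and> bip_weight E S = card A + card B"
proof -
  have fin: "finite V" using G unfolding simple_graph_def by blast
  have sym: "\<And>x y. E x y \<Longrightarrow> E y x" using G unfolding simple_graph_def by blast
  from M have SV: "S \<subseteq> V" and
    mx: "\<And>T. induced_bipartite V E T \<Longrightarrow> S \<subseteq> T \<Longrightarrow> T = S"
    unfolding maximal_induced_bipartite_def induced_bipartite_def by blast+
  from M obtain A1 B1 where AB: "A1 \<union> B1 = S" "A1 \<inter> B1 = {}"
    "independent_set V E A1" "independent_set V E B1"
    unfolding maximal_induced_bipartite_def induced_bipartite_def by blast
  define I where "I = isolated_in E S"
  have IS: "I \<subseteq> S" unfolding I_def isolated_in_def by blast
  have Iiso: "\<And>x y. x \<in> I \<Longrightarrow> y \<in> S \<Longrightarrow> \<not> E x y" unfolding I_def isolated_in_def by blast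
  define A0 where "A0 = A1 - I"
  define B0 where "B0 = B1 - I"
  have finS: "finite S" using SV fin finite_subset by blast
  have part: "S = A0 \<union> B0 \<union> I" "A0 \<inter> B0 = {}" "A0 \<inter> I = {}" "B0 \<inter> I = {}"
    using AB IS unfolding A0_def B0_def by blast+
  have indA0: "\<And>x y. x \<in> A0 \<Longrightarrow> y \<in> A0 \<Longrightarrow> \<not> E x y"
    using AB(3) unfolding A0_def independent_set_def by blast
  have indB0: "\<And>x y. x \<in> B0 \<Longrightarrow> y \<in> B0 \<Longrightarrow> \<not> E x y"
    using AB(4) unfolding B0_def independent_set_def by blast
  have noniso: "\<And>x. x \<in> S \<Longrightarrow> x \<notin> I \<Longrightarrow> \<exists>y\<in>S. E x y"
    unfolding I_def isolated_in_def by blast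
  have gen: "maximal_independent_set V E (X \<union> I)"
    if X: "S = X \<union> Y \<union> I" "X \<inter> Y = {}" "X \<inter> I = {}" "Y \<inter> I = {}"
      and iX: "\<And>x y. x \<in> X \<Longrightarrow> y \<in> X \<Longrightarrow> \<not> E x y"
      and iY: "\<And>x y. x \<in> Y \<Longrightarrow> y \<in> Y \<Longrightarrow> \<not> E x y" for X Y
  proof (rule maxind_intro)
    show ind: "independent_set V E (X \<union> I)"
      unfolding independent_set_def
    proof (intro conjI ballI)
      show "X \<union> I \<subseteq> V" using X SV by blast
    next
      fix x y assume "x \<in> X \<union> I" "y \<in> X \<union> I"
      then show "\<not> E x y" using iX Iiso sym X(1) by blast
    qed
    fix v assume v: "v \<in> V" "v \<notin> X \<union> I"
    show "\<exists>a\<in>X \<union> I. E v a"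
    proof (cases "v \<in> S")
      case True
      then have "v \<in> Y" "v \<notin> I" using v X by blast+
      then obtain y where "y \<in> S" "E v y" using noniso True by blast
      moreover have "y \<notin> I" using Iiso sym \<open>E v y\<close> True by blast
      moreover have "y \<notin> Y" using iY \<open>v \<in> Y\<close> \<open>E v y\<close> by blast
      ultimately show ?thesis using X(1) by blast
    next
      case False
      show ?thesis
      proof (rule ccontr)
        assume nn: "\<not> ?thesis"
        have "induced_bipartite V E (insert v S)"
          unfolding induced_bipartite_def
        proof (intro conjI exI)
          show "insert v S \<subseteq> V" using SV v by blast
          show "insert v (X \<union> I) \<union> Y = insert v S" using X(1) by blast
          have "v \<notin> Y" using False X(1) by blast
          then show "insert v (X \<union> I) \<inter> Y = {}" using X(2,4) by blast
          have nn': "\<And>a. a \<in> X \<union> I \<Longrightarrow> \<not> E v a" using nn by blast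
          have "\<not> E v v" using G unfolding simple_graph_def by blast
          then show "independent_set V E (insert v (X \<union> I))"
            using ind v(1) nn' sym unfolding independent_set_def by (metis insert_iff insert_subset)
          show "independent_set V E Y"
            using iY X(1) SV unfolding independent_set_def by blast
        qed
        then have "insert v S = S" using mx by blast
        then show False using False by blast
      qed
    qed
  qed
  have mA: "maximal_independent_set V E (A0 \<union> I)"
    using gen[OF part indA0 indB0] .
  have mB: "maximal_independent_set V E (B0 \<union> I)"
  proof (rule gen[of B0 A0])
    show "S = B0 \<union> A0 \<union> I" using part(1) by blast
  qed (use part indA0 indB0 in blast)+
  have fA0: "finite A0" "finite B0" "finite I"
    using finS part(1) by (metis finite_Un)+
  have "S - I = A0 \<union> B0" using part by blast
  then have c1: "card (S - I) = card A0 + card B0"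
    using fA0 part(2) by (simp add: card_Un_disjoint)
  have "card (A0 \<union> I) = card A0 + card I" "card (B0 \<union> I) = card B0 + card I"
    using fA0 part(3,4) by (simp_all add: card_Un_disjoint)
  then have "bip_weight E S = card (A0 \<union> I) + card (B0 \<union> I)"
    unfolding bip_weight_def I_def[symmetric] using c1 by simp
  then show ?thesis using mA mB by blast
qed

theorem mainTheorem6:
  fixes V :: "'a set" and E :: "'a \<Rightarrow> 'a \<Rightarrow> bool"
  assumes "simple_graph V E"
    and "well_covered V E"
    and "maximal_induced_bipartite V E S"
    and "maximal_induced_bipartite V E T"
  shows "bip_weight E S = bip_weight E T"
proof -
  obtain A B where 1: "maximal_independent_set V E A" "maximal_independent_set V E B"
    "bip_weight E S = card A + card B" using key[OF assms(1,3)] by blast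
  obtain C D where 2: "maximal_independent_set V E C" "maximal_independent_set V E D"
    "bip_weight E T = card C + card D" using key[OF assms(1,4)] by blast
  have "card A = card C" "card B = card D"
    using assms(2) 1 2 unfolding well_covered_def by blast+
  then show ?thesis using 1 2 by simp
qed

end
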